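(* For every integer $d\ge 50$, $\displaystyle\sum_{H\in\mathcal{R}(d-1)}\left(\frac{1}{d-|H|}-\frac1d\right)<\frac{1}{18}$.
   Context: For finite sets $A,B\subseteq\mathbb{N}^+$, $A$ precedes $B$ in the colexicographic order if $\max(A\triangle B)\in B$. For $m\in\mathbb{N}$, $\mathcal{R}(m)$ denotes the family of the first $m$ finite subsets of $\mathbb{N}^+$ in the colexicographic order (starting with $\emptyset$). *)

theory Defs
  imports Complex_Main
begin

definition fin_pos_sets :: "nat set set" where
  "fin_pos_sets = {A. finite A \<and> 0 \<notin> A}"

definition colex_less :: "nat set \<Rightarrow> nat set \<Rightarrow> bool" where
  "colex_less A B \<longleftrightarrow> A \<noteq> B \<and> Max ((A - B) \<union> (B - A)) \<in> B"

text \<open>R m: the first m finite subsets of the positive integers in colex order,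
  i.e. those having fewer than m predecessors.\<close>
definition R :: "nat \<Rightarrow> nat set set" where
  "R m = {H \<in> fin_pos_sets. card {A \<in> fin_pos_sets. colex_less A H} < m}"

end

theory Submission
  imports Defs
begin

fun pc :: "nat \<Rightarrow> nat" where
 "pc n = (if n = 0 then 0 else n mod 2 + pc (n div 2))"
declare pc.simps[simp del]

fun dec :: "nat \<Rightarrow> nat set" where
 "dec n = (if n = 0 then {} else (if odd n then {1} else {}) \<union> Suc ` dec (n div 2))"
declare dec.simps[simp del]

definition code :: "nat set \<Rightarrow> nat" where
 "code A = (\<Sum>a\<in>A. 2 ^ (a - 1))"

lemma pc_eq: "pc n = n mod 2 + pc (n div 2)"
  by (cases "n = 0") (simp_all add: pc.simps[of n])

lemma code_Suc_image:
  assumes "0 \<notin> Y"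
  shows "code (Suc ` Y) = 2 * code Y"
proof -
  have "code (Suc ` Y) = (\<Sum>y\<in>Y. 2 ^ y)"
    unfolding code_def by (subst sum.reindex) auto
  also have "\<dots> = (\<Sum>y\<in>Y. 2 * 2 ^ (y - 1))"
  proof (rule sum.cong)
    fix y assume "y \<in> Y"
    with assms have "y = Suc (y - 1)" by (cases y) auto
    then show "(2::nat) ^ y = 2 * 2 ^ (y - 1)" by (metis power_Suc)
  qed simp
  finally show ?thesis by (simp add: code_def sum_distrib_left)
qed

lemma dec_props: "finite (dec n) \<and> 0 \<notin> dec n \<and> card (dec n) = pc n \<and> code (dec n) = n"
proof (induction n rule: less_induct)
  case (less n)
  show ?case
  proof (cases "n = 0")
    case True then show ?thesis by (simp add: dec.simps[of 0] pc.simps[of 0] code_def)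
  next
    case False
    define Y where "Y = dec (n div 2)"
    define B where "B = (if odd n then {1::nat} else {})"
    have IH: "finite Y" "0 \<notin> Y" "card Y = pc (n div 2)" "code Y = n div 2"
      using less[of "n div 2"] False by (auto simp: Y_def)
    have dn: "dec n = B \<union> Suc ` Y" using False by (simp add: dec.simps[of n] B_def Y_def)
    have disj: "B \<inter> Suc ` Y = {}" using IH(2) by (auto simp: B_def)
    have fin: "finite (Suc ` Y)" using IH by simp
    have cB: "card B = n mod 2" by (auto simp: B_def odd_iff_mod_2_eq_one)
    have coB: "code B = n mod 2" by (auto simp: B_def code_def odd_iff_mod_2_eq_one)
    have "card (dec n) = card B + card (Suc ` Y)"
      unfolding dn by (rule card_Un_disjoint) (use disj fin in \<open>auto simp: B_def\<close>)
    also have "card (Suc ` Y) = card Y" by (simp add: card_image)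
    finally have c: "card (dec n) = pc n" using cB IH(3) pc_eq[of n] by simp
    have "code (dec n) = code B + code (Suc ` Y)"
      unfolding dn code_def by (rule sum.union_disjoint) (use disj fin in \<open>auto simp: B_def\<close>)
    also have "\<dots> = n mod 2 + 2 * (n div 2)" using coB code_Suc_image[OF IH(2)] IH(4) by simp
    finally have co: "code (dec n) = n" by simp
    show ?thesis using c co dn IH fin by (auto simp: B_def)
  qed
qed

lemma code_below_aux: "(\<Sum>a\<in>{1..<Suc M}. (2::nat) ^ (a - 1)) < 2 ^ M"
proof (induction M)
  case 0 then show ?case by simp
next
  case (Suc M)
  have "{1..<Suc (Suc M)} = insert (Suc M) {1..<Suc M}" by auto
  then have "(\<Sum>a\<in>{1..<Suc (Suc M)}. (2::nat) ^ (a - 1)) = 2 ^ M + (\<Sum>a\<in>{1..<Suc M}. 2 ^ (a - 1))"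
    by simp
  then show ?case using Suc by simp
qed

lemma code_below:
  assumes "0 \<notin> X" "X \<subseteq> {..<M}" "M \<ge> 1"
  shows "code X < 2 ^ (M - 1)"
proof -
  have sub: "X \<subseteq> {1..<Suc (M - 1)}"
  proof
    fix x assume "x \<in> X"
    then have "x \<noteq> 0" "x < M" using assms by (metis, blast)
    then show "x \<in> {1..<Suc (M - 1)}" by auto
  qed
  have "code X \<le> (\<Sum>a\<in>{1..<Suc (M - 1)}. 2 ^ (a - 1))"
    unfolding code_def by (rule sum_mono2[OF _ sub]) auto
  also have "\<dots> < 2 ^ (M - 1)" by (rule code_below_aux)
  finally show ?thesis .
qed

lemma code_mono: "finite B \<Longrightarrow> A \<subseteq> B \<Longrightarrow> code A \<le> code B"
  unfolding code_def by (rule sum_mono2) auto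

lemma colex_code:
  assumes A: "A \<in> fin_pos_sets" and B: "B \<in> fin_pos_sets" and c: "colex_less A B"
  shows "code A < code B"
proof -
  define D where "D = (A - B) \<union> (B - A)"
  define M where "M = Max D"
  have fA: "finite A" "0 \<notin> A" and fB: "finite B" "0 \<notin> B" using A B by (auto simp: fin_pos_sets_def)
  have neq: "A \<noteq> B" and MB: "M \<in> B" using c by (auto simp: colex_less_def D_def M_def)
  have fD: "finite D" using fA fB by (simp add: D_def)
  have Dne: "D \<noteq> {}" using neq by (auto simp: D_def)
  have MD: "M \<in> D" using fD Dne by (simp add: M_def)
  then have MA: "M \<notin> A" using MB by (auto simp: D_def)
  have above: "\<And>x. M < x \<Longrightarrow> (x \<in> A \<longleftrightarrow> x \<in> B)"
  proof -
    fix x assume "M < x"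
    then have "x \<notin> D" using Max_ge[OF fD, of x] by (auto simp: M_def)
    then show "x \<in> A \<longleftrightarrow> x \<in> B" by (auto simp: D_def)
  qed
  define U where "U = {x \<in> A. M < x}"
  have M1: "M \<ge> 1" using MB fB by (cases M) auto
  have Asplit: "A = (A \<inter> {..<M}) \<union> U" using MA by (auto simp: U_def) (metis linorder_neqE_nat)
  have "code A = code (A \<inter> {..<M}) + code U"
    unfolding code_def by (subst Asplit, rule sum.union_disjoint) (use fA in \<open>auto simp: U_def\<close>)
  also have "\<dots> < 2 ^ (M - 1) + code U"
    using code_below[of "A \<inter> {..<M}" M] fA M1 by auto
  also have "\<dots> = code (insert M U)"
    unfolding code_def using fA by (subst sum.insert) (auto simp: U_def)
  also have "\<dots> \<le> code B" using above MB fB by (intro code_mono) (auto simp: U_def)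
  finally show ?thesis .
qed

lemma colex_trich:
  assumes "finite A" "finite B" "A \<noteq> B"
  shows "colex_less A B \<or> colex_less B A"
proof -
  define D where "D = (A - B) \<union> (B - A)"
  have fD: "finite D" using assms by (simp add: D_def)
  have Dne: "D \<noteq> {}" using assms by (auto simp: D_def)
  have "Max D \<in> D" using fD Dne by simp
  moreover have "(B - A) \<union> (A - B) = D" by (auto simp: D_def)
  ultimately show ?thesis using assms(3) unfolding colex_less_def D_def by auto
qed

lemma code_inj:
  assumes "A \<in> fin_pos_sets" "B \<in> fin_pos_sets" "code A = code B"
  shows "A = B"
proof (rule ccontr)
  assume "A \<noteq> B"
  then have "colex_less A B \<or> colex_less B A" using assms colex_trich by (auto simp: fin_pos_sets_def)
  then show False using colex_code assms by fastforce
qed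

lemma dec_fps: "dec n \<in> fin_pos_sets" using dec_props[of n] by (simp add: fin_pos_sets_def)

lemma code_dec: "code (dec n) = n" using dec_props[of n] by simp

lemma dec_code: "A \<in> fin_pos_sets \<Longrightarrow> dec (code A) = A"
  using code_inj[of "dec (code A)" A] dec_fps code_dec by simp

lemma inj_dec: "inj_on dec X"
  by (metis code_dec inj_onI)

lemma preds:
  assumes H: "H \<in> fin_pos_sets"
  shows "{A \<in> fin_pos_sets. colex_less A H} = dec ` {..<code H}"
proof
  show "{A \<in> fin_pos_sets. colex_less A H} \<subseteq> dec ` {..<code H}"
  proof
    fix A assume "A \<in> {A \<in> fin_pos_sets. colex_less A H}"
    then have "A \<in> fin_pos_sets" "code A < code H" using colex_code H by auto
    then show "A \<in> dec ` {..<code H}" using dec_code by (metis image_eqI lessThan_iff)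
  qed
next
  show "dec ` {..<code H} \<subseteq> {A \<in> fin_pos_sets. colex_less A H}"
  proof
    fix A assume "A \<in> dec ` {..<code H}"
    then obtain n where n: "n < code H" "A = dec n" by auto
    have Af: "A \<in> fin_pos_sets" using n dec_fps by simp
    have cA: "code A < code H" using n code_dec by simp
    then have "A \<noteq> H" by auto
    moreover have "\<not> colex_less H A" using colex_code[OF H Af] cA by auto
    ultimately have "colex_less A H" using colex_trich Af H by (auto simp: fin_pos_sets_def)
    then show "A \<in> {A \<in> fin_pos_sets. colex_less A H}" using Af by simp
  qed
qed

lemma card_preds: "H \<in> fin_pos_sets \<Longrightarrow> card {A \<in> fin_pos_sets. colex_less A H} = code H"
  by (simp add: preds card_image inj_dec)

lemma R_eq: "R m = dec ` {..<m}"
proof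
  show "R m \<subseteq> dec ` {..<m}"
  proof
    fix H assume "H \<in> R m"
    then have "H \<in> fin_pos_sets" "code H < m" by (auto simp: R_def card_preds)
    then show "H \<in> dec ` {..<m}" using dec_code by (metis image_eqI lessThan_iff)
  qed
next
  show "dec ` {..<m} \<subseteq> R m"
    using dec_fps card_preds[OF dec_fps] code_dec by (auto simp: R_def)
qed

lemma R_sum: "(\<Sum>H\<in>R m. g (card H)) = (\<Sum>n<m. g (pc n))"
  unfolding R_eq by (subst sum.reindex[OF inj_dec]) (simp add: dec_props)


lemma pc_shift: "r < 2 ^ k \<Longrightarrow> pc (2 ^ k + r) = Suc (pc r)"
proof (induction k arbitrary: r)
  case 0 then show ?case using pc_eq[of 1] by (simp add: pc.simps[of 0])
next
  case (Suc k)
  have m: "(2 ^ Suc k + r) mod 2 = r mod 2" by simp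
  have d: "(2 ^ Suc k + r) div 2 = 2 ^ k + r div 2" by simp
  have "r div 2 < 2 ^ k" using Suc.prems by simp
  then have "pc (2 ^ k + r div 2) = Suc (pc (r div 2))" by (rule Suc.IH)
  then show ?case using pc_eq[of "2 ^ Suc k + r"] pc_eq[of r] m d by simp
qed

lemma pc_le: "n < 2 ^ k \<Longrightarrow> pc n \<le> k"
proof (induction k arbitrary: n)
  case 0 then show ?case by (simp add: pc.simps[of 0])
next
  case (Suc k)
  show ?case
  proof (cases "n < 2 ^ k")
    case True then show ?thesis using Suc.IH by (simp add: le_SucI)
  next
    case False
    define r where "r = n - 2 ^ k"
    have n: "n = 2 ^ k + r" and r: "r < 2 ^ k" using False Suc.prems by (auto simp: r_def)
    show ?thesis using pc_shift[OF r] Suc.IH[OF r] n by simp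
  qed
qed

definition F :: "nat \<Rightarrow> nat" where "F m = (\<Sum>n<m. pc n)"

lemma F_split: "r \<le> 2 ^ k \<Longrightarrow> F (2 ^ k + r) = F (2 ^ k) + r + F r"
proof (induction r)
  case 0 then show ?case by (simp add: F_def)
next
  case (Suc r)
  then have "r < 2 ^ k" by simp
  then have "pc (2 ^ k + r) = Suc (pc r)" by (rule pc_shift)
  then show ?case using Suc by (simp add: F_def)
qed

lemma F_bound: "m \<le> 2 ^ k \<Longrightarrow> 2 * F m \<le> k * m"
proof (induction k arbitrary: m)
  case 0
  then have "m = 0 \<or> m = 1" by auto
  then show ?case by (auto simp: F_def pc.simps[of 0])
next
  case (Suc k)
  show ?case
  proof (cases "m \<le> 2 ^ k")
    case True then show ?thesis using Suc.IH[OF True] by (meson le_trans mult_le_mono1 le_SucI order_refl)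
  next
    case False
    define r where "r = m - 2 ^ k"
    define p where "p = (2::nat) ^ k"
    have m: "m = p + r" and r: "r \<le> p" using False Suc.prems by (auto simp: r_def p_def)
    have 1: "2 * F p \<le> k * p" using Suc.IH[of p] by (simp add: p_def)
    have 2: "2 * F r \<le> k * r" using Suc.IH[of r] r by (simp add: p_def)
    have "F m = F p + r + F r" using F_split[of r k] r m by (simp add: p_def)
    then have "2 * F m = 2 * F p + 2 * r + 2 * F r" by simp
    also have "\<dots> \<le> k * p + 2 * r + k * r" using 1 2 by simp
    also have "\<dots> \<le> Suc k * m" using r m by (simp add: algebra_simps)
    finally show ?thesis .
  qed
qed

lemma pow_big: "8 \<le> k \<Longrightarrow> 10 * k \<le> (2::nat) ^ (k - 1)"
proof (induction k rule: dec_induct)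
  case base then show ?case by simp
next
  case (step k)
  then have "(2::nat) ^ (Suc k - 1) = 2 * 2 ^ (k - 1)" by (cases k) auto
  then show ?case using step by simp
qed

lemma large:
  fixes d :: nat
  assumes "d \<ge> 70"
  shows "(\<Sum>n<d - 1. 1 / (real d - real (pc n)) - 1 / real d) < 1 / 18"
proof -
  have ex: "\<exists>k. d - 1 \<le> 2 ^ k" using less_exp[of "d - 1"] less_imp_le by blast
  define k where "k = (LEAST k. d - 1 \<le> 2 ^ k)"
  have k1: "d - 1 \<le> 2 ^ k" unfolding k_def by (rule LeastI_ex[OF ex])
  have k7: "k \<ge> 7"
  proof (rule ccontr)
    assume "\<not> k \<ge> 7"
    then have "(2::nat) ^ k \<le> 2 ^ 6" by (intro power_increasing) auto
    then show False using k1 assms by simp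
  qed
  have k2: "\<not> d - 1 \<le> 2 ^ (k - 1)"
  proof
    assume "d - 1 \<le> 2 ^ (k - 1)"
    then have "k \<le> k - 1" unfolding k_def by (rule Least_le)
    then show False using k7 by simp
  qed
  have dk: "10 * k \<le> d"
  proof (cases "k = 7")
    case True then show ?thesis using assms by simp
  next
    case False
    then have "10 * k \<le> 2 ^ (k - 1)" using k7 by (intro pow_big) auto
    then show ?thesis using k2 by simp
  qed
  have pcb: "\<And>n. n < d - 1 \<Longrightarrow> pc n \<le> k" using k1 by (intro pc_le) auto
  have dpos: "real d > 0" using assms by simp
  have dkpos: "real d - real k > 0" using dk k7 by simp
  have "(\<Sum>n<d - 1. 1 / (real d - real (pc n)) - 1 / real d)
      \<le> (\<Sum>n<d - 1. real (pc n) / (real d * (real d - real k)))"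
  proof (rule sum_mono)
    fix n assume "n \<in> {..<d - 1}"
    then have le: "real (pc n) \<le> real k" using pcb by simp
    then have pos: "real d - real (pc n) > 0" using dkpos by simp
    have "1 / (real d - real (pc n)) - 1 / real d = real (pc n) / (real d * (real d - real (pc n)))"
      using pos dpos by (simp add: field_simps)
    also have "\<dots> \<le> real (pc n) / (real d * (real d - real k))"
      using le dpos dkpos pos by (intro divide_left_mono mult_left_mono mult_pos_pos) auto
    finally show "1 / (real d - real (pc n)) - 1 / real d \<le> real (pc n) / (real d * (real d - real k))" .
  qed
  also have "\<dots> = real (F (d - 1)) / (real d * (real d - real k))"
    by (simp add: F_def sum_divide_distrib)
  also have "\<dots> \<le> (real k * (real d - 1) / 2) / (real d * (real d - real k))"
  proof (rule divide_right_mono)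
    have "2 * F (d - 1) \<le> k * (d - 1)" using F_bound[OF k1] .
    then have "2 * real (F (d - 1)) \<le> real k * real (d - 1)" by (metis of_nat_le_iff of_nat_mult of_nat_numeral)
    then show "real (F (d - 1)) \<le> real k * (real d - 1) / 2" using assms by (simp add: of_nat_diff)
  qed (use dpos dkpos in simp)
  also have "\<dots> < 1 / 18"
  proof -
    have "real d * (real d - real k) \<ge> real d * (9 * real k)"
      using dk dpos by (intro mult_left_mono) auto
    moreover have "real k > 0" using k7 by simp
    ultimately have "9 * (real k * (real d - 1)) < real d * (real d - real k)"
      by (simp add: algebra_simps)
    then show ?thesis using dpos dkpos by (simp add: field_simps)
  qed
  finally show ?thesis .
qed


definition cnt :: "nat \<Rightarrow> nat \<Rightarrow> nat" where
  "cnt m j = length (filter (\<lambda>n. pc n = j) [0..<m])"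

lemma fiber:
  assumes "\<forall>n<m. pc n < K"
  shows "(\<Sum>n<m. f (pc n) :: real) = (\<Sum>j<K. real (cnt m j) * f j)"
proof -
  have "(\<Sum>n<m. f (pc n)) = (\<Sum>j<K. \<Sum>n\<in>{x. x \<in> {..<m} \<and> pc x = j}. f (pc n))"
    by (rule sum.group[symmetric]) (use assms in auto)
  also have "\<dots> = (\<Sum>j<K. real (cnt m j) * f j)"
  proof (rule sum.cong)
    fix j
    have "(\<Sum>n\<in>{x. x \<in> {..<m} \<and> pc x = j}. f (pc n)) = (\<Sum>n\<in>{x. x \<in> {..<m} \<and> pc x = j}. f j)"
      by (rule sum.cong) auto
    also have "\<dots> = real (card {x. x \<in> {..<m} \<and> pc x = j}) * f j" by simp
    also have "card {x. x \<in> {..<m} \<and> pc x = j} = cnt m j"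
      unfolding cnt_def by (subst distinct_length_filter) (auto intro: arg_cong[where f=card])
    finally show "(\<Sum>n\<in>{x. x \<in> {..<m} \<and> pc x = j}. f (pc n)) = real (cnt m j) * f j" .
  qed simp
  finally show ?thesis .
qed

lemma sum8: "(\<Sum>j<(8::nat). g j) = g 0 + g 1 + g 2 + g 3 + g 4 + g 5 + g 6 + (g 7 :: real)"
  by (simp add: eval_nat_numeral)

lemma pc_small: "n < 128 \<Longrightarrow> pc n < 8"
  using pc_le[of n 7] by simp

lemma small50: "(\<Sum>n<50 - 1. 1 / (real 50 - real (pc n)) - 1 / real 50) < 1 / 18"
proof -
  have c: "cnt 49 0 = 1 \<and> cnt 49 1 = 6 \<and> cnt 49 2 = 15 \<and> cnt 49 3 = 16 \<and> cnt 49 4 = 9 \<and> cnt 49 5 = 2 \<and> cnt 49 6 = 0 \<and> cnt 49 7 = 0" by code_simp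
  have b: "\<forall>n<49. pc n < 8" using pc_small by simp
  show ?thesis using fiber[OF b, of "\<lambda>j. 1 / (real 50 - real j) - 1 / real 50"] c by (simp add: sum8)
qed

lemma small51: "(\<Sum>n<51 - 1. 1 / (real 51 - real (pc n)) - 1 / real 51) < 1 / 18"
proof -
  have c: "cnt 50 0 = 1 \<and> cnt 50 1 = 6 \<and> cnt 50 2 = 15 \<and> cnt 50 3 = 17 \<and> cnt 50 4 = 9 \<and> cnt 50 5 = 2 \<and> cnt 50 6 = 0 \<and> cnt 50 7 = 0" by code_simp
  have b: "\<forall>n<50. pc n < 8" using pc_small by simp
  show ?thesis using fiber[OF b, of "\<lambda>j. 1 / (real 51 - real j) - 1 / real 51"] c by (simp add: sum8)
qed

lemma small52: "(\<Sum>n<52 - 1. 1 / (real 52 - real (pc n)) - 1 / real 52) < 1 / 18"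
proof -
  have c: "cnt 51 0 = 1 \<and> cnt 51 1 = 6 \<and> cnt 51 2 = 15 \<and> cnt 51 3 = 18 \<and> cnt 51 4 = 9 \<and> cnt 51 5 = 2 \<and> cnt 51 6 = 0 \<and> cnt 51 7 = 0" by code_simp
  have b: "\<forall>n<51. pc n < 8" using pc_small by simp
  show ?thesis using fiber[OF b, of "\<lambda>j. 1 / (real 52 - real j) - 1 / real 52"] c by (simp add: sum8)
qed

lemma small53: "(\<Sum>n<53 - 1. 1 / (real 53 - real (pc n)) - 1 / real 53) < 1 / 18"
proof -
  have c: "cnt 52 0 = 1 \<and> cnt 52 1 = 6 \<and> cnt 52 2 = 15 \<and> cnt 52 3 = 18 \<and> cnt 52 4 = 10 \<and> cnt 52 5 = 2 \<and> cnt 52 6 = 0 \<and> cnt 52 7 = 0" by code_simp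
  have b: "\<forall>n<52. pc n < 8" using pc_small by simp
  show ?thesis using fiber[OF b, of "\<lambda>j. 1 / (real 53 - real j) - 1 / real 53"] c by (simp add: sum8)
qed

lemma small54: "(\<Sum>n<54 - 1. 1 / (real 54 - real (pc n)) - 1 / real 54) < 1 / 18"
proof -
  have c: "cnt 53 0 = 1 \<and> cnt 53 1 = 6 \<and> cnt 53 2 = 15 \<and> cnt 53 3 = 19 \<and> cnt 53 4 = 10 \<and> cnt 53 5 = 2 \<and> cnt 53 6 = 0 \<and> cnt 53 7 = 0" by code_simp
  have b: "\<forall>n<53. pc n < 8" using pc_small by simp
  show ?thesis using fiber[OF b, of "\<lambda>j. 1 / (real 54 - real j) - 1 / real 54"] c by (simp add: sum8)
qed

lemma small55: "(\<Sum>n<55 - 1. 1 / (real 55 - real (pc n)) - 1 / real 55) < 1 / 18"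
proof -
  have c: "cnt 54 0 = 1 \<and> cnt 54 1 = 6 \<and> cnt 54 2 = 15 \<and> cnt 54 3 = 19 \<and> cnt 54 4 = 11 \<and> cnt 54 5 = 2 \<and> cnt 54 6 = 0 \<and> cnt 54 7 = 0" by code_simp
  have b: "\<forall>n<54. pc n < 8" using pc_small by simp
  show ?thesis using fiber[OF b, of "\<lambda>j. 1 / (real 55 - real j) - 1 / real 55"] c by (simp add: sum8)
qed

lemma small56: "(\<Sum>n<56 - 1. 1 / (real 56 - real (pc n)) - 1 / real 56) < 1 / 18"
proof -
  have c: "cnt 55 0 = 1 \<and> cnt 55 1 = 6 \<and> cnt 55 2 = 15 \<and> cnt 55 3 = 19 \<and> cnt 55 4 = 12 \<and> cnt 55 5 = 2 \<and> cnt 55 6 = 0 \<and> cnt 55 7 = 0" by code_simp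
  have b: "\<forall>n<55. pc n < 8" using pc_small by simp
  show ?thesis using fiber[OF b, of "\<lambda>j. 1 / (real 56 - real j) - 1 / real 56"] c by (simp add: sum8)
qed

lemma small57: "(\<Sum>n<57 - 1. 1 / (real 57 - real (pc n)) - 1 / real 57) < 1 / 18"
proof -
  have c: "cnt 56 0 = 1 \<and> cnt 56 1 = 6 \<and> cnt 56 2 = 15 \<and> cnt 56 3 = 19 \<and> cnt 56 4 = 12 \<and> cnt 56 5 = 3 \<and> cnt 56 6 = 0 \<and> cnt 56 7 = 0" by code_simp
  have b: "\<forall>n<56. pc n < 8" using pc_small by simp
  show ?thesis using fiber[OF b, of "\<lambda>j. 1 / (real 57 - real j) - 1 / real 57"] c by (simp add: sum8)
qed

lemma small58: "(\<Sum>n<58 - 1. 1 / (real 58 - real (pc n)) - 1 / real 58) < 1 / 18"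
proof -
  have c: "cnt 57 0 = 1 \<and> cnt 57 1 = 6 \<and> cnt 57 2 = 15 \<and> cnt 57 3 = 20 \<and> cnt 57 4 = 12 \<and> cnt 57 5 = 3 \<and> cnt 57 6 = 0 \<and> cnt 57 7 = 0" by code_simp
  have b: "\<forall>n<57. pc n < 8" using pc_small by simp
  show ?thesis using fiber[OF b, of "\<lambda>j. 1 / (real 58 - real j) - 1 / real 58"] c by (simp add: sum8)
qed

lemma small59: "(\<Sum>n<59 - 1. 1 / (real 59 - real (pc n)) - 1 / real 59) < 1 / 18"
proof -
  have c: "cnt 58 0 = 1 \<and> cnt 58 1 = 6 \<and> cnt 58 2 = 15 \<and> cnt 58 3 = 20 \<and> cnt 58 4 = 13 \<and> cnt 58 5 = 3 \<and> cnt 58 6 = 0 \<and> cnt 58 7 = 0" by code_simp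
  have b: "\<forall>n<58. pc n < 8" using pc_small by simp
  show ?thesis using fiber[OF b, of "\<lambda>j. 1 / (real 59 - real j) - 1 / real 59"] c by (simp add: sum8)
qed

lemma small60: "(\<Sum>n<60 - 1. 1 / (real 60 - real (pc n)) - 1 / real 60) < 1 / 18"
proof -
  have c: "cnt 59 0 = 1 \<and> cnt 59 1 = 6 \<and> cnt 59 2 = 15 \<and> cnt 59 3 = 20 \<and> cnt 59 4 = 14 \<and> cnt 59 5 = 3 \<and> cnt 59 6 = 0 \<and> cnt 59 7 = 0" by code_simp
  have b: "\<forall>n<59. pc n < 8" using pc_small by simp
  show ?thesis using fiber[OF b, of "\<lambda>j. 1 / (real 60 - real j) - 1 / real 60"] c by (simp add: sum8)
qed

lemma small61: "(\<Sum>n<61 - 1. 1 / (real 61 - real (pc n)) - 1 / real 61) < 1 / 18"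
proof -
  have c: "cnt 60 0 = 1 \<and> cnt 60 1 = 6 \<and> cnt 60 2 = 15 \<and> cnt 60 3 = 20 \<and> cnt 60 4 = 14 \<and> cnt 60 5 = 4 \<and> cnt 60 6 = 0 \<and> cnt 60 7 = 0" by code_simp
  have b: "\<forall>n<60. pc n < 8" using pc_small by simp
  show ?thesis using fiber[OF b, of "\<lambda>j. 1 / (real 61 - real j) - 1 / real 61"] c by (simp add: sum8)
qed

lemma small62: "(\<Sum>n<62 - 1. 1 / (real 62 - real (pc n)) - 1 / real 62) < 1 / 18"
proof -
  have c: "cnt 61 0 = 1 \<and> cnt 61 1 = 6 \<and> cnt 61 2 = 15 \<and> cnt 61 3 = 20 \<and> cnt 61 4 = 15 \<and> cnt 61 5 = 4 \<and> cnt 61 6 = 0 \<and> cnt 61 7 = 0" by code_simp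
  have b: "\<forall>n<61. pc n < 8" using pc_small by simp
  show ?thesis using fiber[OF b, of "\<lambda>j. 1 / (real 62 - real j) - 1 / real 62"] c by (simp add: sum8)
qed

lemma small63: "(\<Sum>n<63 - 1. 1 / (real 63 - real (pc n)) - 1 / real 63) < 1 / 18"
proof -
  have c: "cnt 62 0 = 1 \<and> cnt 62 1 = 6 \<and> cnt 62 2 = 15 \<and> cnt 62 3 = 20 \<and> cnt 62 4 = 15 \<and> cnt 62 5 = 5 \<and> cnt 62 6 = 0 \<and> cnt 62 7 = 0" by code_simp
  have b: "\<forall>n<62. pc n < 8" using pc_small by simp
  show ?thesis using fiber[OF b, of "\<lambda>j. 1 / (real 63 - real j) - 1 / real 63"] c by (simp add: sum8)
qed

lemma small64: "(\<Sum>n<64 - 1. 1 / (real 64 - real (pc n)) - 1 / real 64) < 1 / 18"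
proof -
  have c: "cnt 63 0 = 1 \<and> cnt 63 1 = 6 \<and> cnt 63 2 = 15 \<and> cnt 63 3 = 20 \<and> cnt 63 4 = 15 \<and> cnt 63 5 = 6 \<and> cnt 63 6 = 0 \<and> cnt 63 7 = 0" by code_simp
  have b: "\<forall>n<63. pc n < 8" using pc_small by simp
  show ?thesis using fiber[OF b, of "\<lambda>j. 1 / (real 64 - real j) - 1 / real 64"] c by (simp add: sum8)
qed

lemma small65: "(\<Sum>n<65 - 1. 1 / (real 65 - real (pc n)) - 1 / real 65) < 1 / 18"
proof -
  have c: "cnt 64 0 = 1 \<and> cnt 64 1 = 6 \<and> cnt 64 2 = 15 \<and> cnt 64 3 = 20 \<and> cnt 64 4 = 15 \<and> cnt 64 5 = 6 \<and> cnt 64 6 = 1 \<and> cnt 64 7 = 0" by code_simp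
  have b: "\<forall>n<64. pc n < 8" using pc_small by simp
  show ?thesis using fiber[OF b, of "\<lambda>j. 1 / (real 65 - real j) - 1 / real 65"] c by (simp add: sum8)
qed

lemma small66: "(\<Sum>n<66 - 1. 1 / (real 66 - real (pc n)) - 1 / real 66) < 1 / 18"
proof -
  have c: "cnt 65 0 = 1 \<and> cnt 65 1 = 7 \<and> cnt 65 2 = 15 \<and> cnt 65 3 = 20 \<and> cnt 65 4 = 15 \<and> cnt 65 5 = 6 \<and> cnt 65 6 = 1 \<and> cnt 65 7 = 0" by code_simp
  have b: "\<forall>n<65. pc n < 8" using pc_small by simp
  show ?thesis using fiber[OF b, of "\<lambda>j. 1 / (real 66 - real j) - 1 / real 66"] c by (simp add: sum8)
qed

lemma small67: "(\<Sum>n<67 - 1. 1 / (real 67 - real (pc n)) - 1 / real 67) < 1 / 18"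
proof -
  have c: "cnt 66 0 = 1 \<and> cnt 66 1 = 7 \<and> cnt 66 2 = 16 \<and> cnt 66 3 = 20 \<and> cnt 66 4 = 15 \<and> cnt 66 5 = 6 \<and> cnt 66 6 = 1 \<and> cnt 66 7 = 0" by code_simp
  have b: "\<forall>n<66. pc n < 8" using pc_small by simp
  show ?thesis using fiber[OF b, of "\<lambda>j. 1 / (real 67 - real j) - 1 / real 67"] c by (simp add: sum8)
qed

lemma small68: "(\<Sum>n<68 - 1. 1 / (real 68 - real (pc n)) - 1 / real 68) < 1 / 18"
proof -
  have c: "cnt 67 0 = 1 \<and> cnt 67 1 = 7 \<and> cnt 67 2 = 17 \<and> cnt 67 3 = 20 \<and> cnt 67 4 = 15 \<and> cnt 67 5 = 6 \<and> cnt 67 6 = 1 \<and> cnt 67 7 = 0" by code_simp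
  have b: "\<forall>n<67. pc n < 8" using pc_small by simp
  show ?thesis using fiber[OF b, of "\<lambda>j. 1 / (real 68 - real j) - 1 / real 68"] c by (simp add: sum8)
qed

lemma small69: "(\<Sum>n<69 - 1. 1 / (real 69 - real (pc n)) - 1 / real 69) < 1 / 18"
proof -
  have c: "cnt 68 0 = 1 \<and> cnt 68 1 = 7 \<and> cnt 68 2 = 17 \<and> cnt 68 3 = 21 \<and> cnt 68 4 = 15 \<and> cnt 68 5 = 6 \<and> cnt 68 6 = 1 \<and> cnt 68 7 = 0" by code_simp
  have b: "\<forall>n<68. pc n < 8" using pc_small by simp
  show ?thesis using fiber[OF b, of "\<lambda>j. 1 / (real 69 - real j) - 1 / real 69"] c by (simp add: sum8)
qed

lemma small: "50 \<le> d \<Longrightarrow> d < 70 \<Longrightarrow> (\<Sum>n<d - 1. 1 / (real d - real (pc n)) - 1 / real d) < 1 / 18"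
proof -
  assume "50 \<le> d" "d < 70"
  then have "d = 50 \<or> d = 51 \<or> d = 52 \<or> d = 53 \<or> d = 54 \<or> d = 55 \<or> d = 56 \<or> d = 57 \<or> d = 58 \<or> d = 59 \<or> d = 60 \<or> d = 61 \<or> d = 62 \<or> d = 63 \<or> d = 64 \<or> d = 65 \<or> d = 66 \<or> d = 67 \<or> d = 68 \<or> d = 69" by presburger
  then show ?thesis using small50 small51 small52 small53 small54 small55 small56 small57 small58 small59 small60 small61 small62 small63 small64 small65 small66 small67 small68 small69 by (elim disjE) simp_all
qed


theorem mainTheorem20:
  fixes d :: nat
  assumes "d \<ge> 50"
  shows "(\<Sum>H\<in>R (d - 1). 1 / (real d - real (card H)) - 1 / real d) < 1 / 18"
proof -
  have "(\<Sum>H\<in>R (d - 1). 1 / (real d - real (card H)) - 1 / real d)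
      = (\<Sum>n<d - 1. 1 / (real d - real (pc n)) - 1 / real d)"
    by (rule R_sum)
  also have "\<dots> < 1 / 18"
  proof (cases "d < 70")
    case True then show ?thesis using small assms by simp
  next
    case False then show ?thesis using large by simp
  qed
  finally show ?thesis .
qed

end
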